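(* Let $\Phi$ be a Young function such that the limits $p_0=\lim_{t\to0^+}\frac{t\Phi'(t)}{\Phi(t)}$ and $p_\infty=\lim_{t\to\infty}\frac{t\Phi'(t)}{\Phi(t)}$ exist as finite real numbers. Let $p=\max\{p_0,p_\infty\}$ and $q=\min\{p_0,p_\infty\}$. Then for every $\varepsilon>0$ there exists a Young function $\Psi$ equivalent to $\Phi$ with $p\le p_\Psi<p+\varepsilon$ and $q-\varepsilon<q_\Psi\le q$.
   Context: A Young function is a convex function $\Phi:[0,\infty)\to[0,\infty)$ with $\Phi(0)=0$, $\Phi(t)>0$ for $t>0$, and $\lim_{t\to\infty}\Phi(t)=\infty$. $\Phi'$ denotes the right derivative of $\Phi$. The Lebesgue exponents of $\Phi$ are $p_\Phi=\sup_{t>0}\frac{t\Phi'(t)}{\Phi(t)}$ and $q_\Phi=\inf_{t>0}\frac{t\Phi'(t)}{\Phi(t)}$. Two Young functions $\Phi,\Psi$ are equivalent if there is $C\ge1$ with $C^{-1}\Psi(t)\le\Phi(t)\le C\Psi(t)$ for all $t\ge0$. *)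

theory Defs
  imports "HOL-Analysis.Analysis"
begin

text \<open>Young function on [0,\<infinity>), represented as a real function whose values
  on negative arguments are irrelevant.\<close>
definition young_function :: "(real \<Rightarrow> real) \<Rightarrow> bool" where
  "young_function \<Phi> \<longleftrightarrow> convex_on {0..} \<Phi> \<and> \<Phi> 0 = 0 \<and> (\<forall>t>0. \<Phi> t > 0)
     \<and> filterlim \<Phi> at_top at_top"

definition right_deriv :: "(real \<Rightarrow> real) \<Rightarrow> real \<Rightarrow> real" where
  "right_deriv f t = Lim (at_right 0) (\<lambda>h. (f (t + h) - f t) / h)"

text \<open>Lebesgue exponents (as extended reals, since the supremum may be infinite).\<close>
definition upper_index :: "(real \<Rightarrow> real) \<Rightarrow> ereal" where
  "upper_index \<Phi> = (SUP t\<in>{0<..}. ereal (t * right_deriv \<Phi> t / \<Phi> t))"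

definition lower_index :: "(real \<Rightarrow> real) \<Rightarrow> ereal" where
  "lower_index \<Phi> = (INF t\<in>{0<..}. ereal (t * right_deriv \<Phi> t / \<Phi> t))"

definition young_equiv :: "(real \<Rightarrow> real) \<Rightarrow> (real \<Rightarrow> real) \<Rightarrow> bool" where
  "young_equiv \<Phi> \<Psi> \<longleftrightarrow> (\<exists>C\<ge>1. \<forall>t\<ge>0. \<Psi> t / C \<le> \<Phi> t \<and> \<Phi> t \<le> C * \<Psi> t)"

end

theory Submission
  imports Defs
begin


lemma swapdiv: "((a::real) - b) / (c - d) = (b - a) / (d - c)"
  by (metis minus_diff_eq minus_divide_divide)

lemma young_slope_le:
  assumes Y: "young_function \<Phi>" and "0 \<le> s" "s < t" "0 < h"
  shows "(\<Phi> t - \<Phi> s) / (t - s) \<le> (\<Phi> (t+h) - \<Phi> t) / h"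
proof -
  have cv: "convex_on {0..} \<Phi>" using Y by (simp add: young_function_def)
  have 1: "(\<Phi> s - \<Phi> t) / (s - t) \<le> (\<Phi> s - \<Phi> (t+h)) / (s - (t+h))"
   and 2: "(\<Phi> s - \<Phi> (t+h)) / (s - (t+h)) \<le> (\<Phi> t - \<Phi> (t+h)) / (t - (t+h))"
  proof -
    have m: "s \<in> {0..}" "t+h \<in> {0..}" "s < t" "t < t+h" using assms by auto
    show "(\<Phi> s - \<Phi> t) / (s - t) \<le> (\<Phi> s - \<Phi> (t+h)) / (s - (t+h))"
      "(\<Phi> s - \<Phi> (t+h)) / (s - (t+h)) \<le> (\<Phi> t - \<Phi> (t+h)) / (t - (t+h))"
      using convex_on_slope_le[OF cv m] by auto
  qed
  have "(\<Phi> t - \<Phi> s) / (t - s) = (\<Phi> s - \<Phi> t) / (s - t)"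
    by (rule swapdiv)
  also have "(\<Phi> t - \<Phi> (t+h)) / (t - (t+h)) = (\<Phi> (t+h) - \<Phi> t) / h"
    using swapdiv[of "\<Phi> t" "\<Phi> (t+h)" t "t+h"] by simp
  ultimately show ?thesis using 1 2 by linarith
qed

lemma young_quot_mono:
  assumes Y: "young_function \<Phi>" and "0 \<le> t" "0 < h1" "h1 \<le> h2"
  shows "(\<Phi> (t+h1) - \<Phi> t) / h1 \<le> (\<Phi> (t+h2) - \<Phi> t) / h2"
proof (cases "h1 = h2")
  case False
  have cv: "convex_on {0..} \<Phi>" using Y by (simp add: young_function_def)
  have 1: "(\<Phi> t - \<Phi> (t+h1)) / (t - (t+h1)) \<le> (\<Phi> t - \<Phi> (t+h2)) / (t - (t+h2))"
  proof -
    have m: "t \<in> {0..}" "t+h2 \<in> {0..}" "t < t+h1" "t+h1 < t+h2" using assms False by auto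
    show ?thesis using convex_on_slope_le(1)[OF cv m] .
  qed
  then show ?thesis using swapdiv[of "\<Phi> t" "\<Phi> (t+h1)" t "t+h1"] swapdiv[of "\<Phi> t" "\<Phi> (t+h2)" t "t+h2"] by simp
qed simp

lemma young_pos: "young_function \<Phi> \<Longrightarrow> 0 < t \<Longrightarrow> 0 < \<Phi> t"
  by (simp add: young_function_def)

lemma young_zero: "young_function \<Phi> \<Longrightarrow> \<Phi> 0 = 0"
  by (simp add: young_function_def)

lemma young_nonneg: "young_function \<Phi> \<Longrightarrow> 0 \<le> t \<Longrightarrow> 0 \<le> \<Phi> t"
  by (cases "t = 0") (auto simp: young_function_def intro: less_imp_le)

lemma young_quot_lower:
  assumes Y: "young_function \<Phi>" and "0 < t" "0 < h"
  shows "\<Phi> t / t \<le> (\<Phi> (t+h) - \<Phi> t) / h"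
  using young_slope_le[OF Y, of 0 t h] assms young_zero[OF Y] by simp

lemma young_mono:
  assumes Y: "young_function \<Phi>" and "0 \<le> s" "s \<le> t"
  shows "\<Phi> s \<le> \<Phi> t"
proof (cases "s = t")
  case False
  then have "s < t" using assms by simp
  show ?thesis
  proof (cases "s = 0")
    case True then show ?thesis using young_nonneg[OF Y, of t] young_zero[OF Y] assms by simp
  next
    case F: False
    have "\<Phi> s / s \<le> (\<Phi> (s + (t - s)) - \<Phi> s) / (t - s)"
      using young_quot_lower[OF Y, of s "t - s"] assms F \<open>s<t\<close> by simp
    moreover have "0 \<le> \<Phi> s / s" using young_nonneg[OF Y, of s] assms by simp
    ultimately have "0 \<le> (\<Phi> t - \<Phi> s) / (t - s)" by simp
    then show ?thesis using \<open>s<t\<close> by (simp add: zero_le_divide_iff)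
  qed
qed simp

lemma young_rd:
  assumes Y: "young_function \<Phi>" and t: "0 < t"
  shows "((\<lambda>h. (\<Phi> (t+h) - \<Phi> t) / h) \<longlongrightarrow> right_deriv \<Phi> t) (at_right 0)"
    and "\<And>h. 0 < h \<Longrightarrow> right_deriv \<Phi> t \<le> (\<Phi> (t+h) - \<Phi> t) / h"
    and "\<And>s. 0 \<le> s \<Longrightarrow> s < t \<Longrightarrow> (\<Phi> t - \<Phi> s) / (t - s) \<le> right_deriv \<Phi> t"
proof -
  define q where "q = (\<lambda>h. (\<Phi> (t+h) - \<Phi> t) / h)"
  define L where "L = Inf (q ` {0<..})"
  have bdd: "bdd_below (q ` {0<..})"
    using young_quot_lower[OF Y t] unfolding q_def bdd_below_def by blast
  have Lle: "L \<le> q h" if "0 < h" for h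
    unfolding L_def using bdd that by (auto intro: cInf_lower)
  have geL: "(\<Phi> t - \<Phi> s) / (t - s) \<le> L" if "0 \<le> s" "s < t" for s
    unfolding L_def by (rule cInf_greatest) (use young_slope_le[OF Y that] in \<open>auto simp: q_def\<close>)
  have lim: "(q \<longlongrightarrow> L) (at_right 0)"
  proof (rule tendstoI)
    fix e :: real assume e: "0 < e"
    have "\<exists>y\<in>q ` {0<..}. y < L + e"
      using cInf_lessD[of "q ` {0<..}" "L + e"] e unfolding L_def by auto
    then obtain h0 where h0: "0 < h0" "q h0 < L + e" by auto
    show "\<forall>\<^sub>F h in at_right 0. dist (q h) L < e"
      unfolding eventually_at_right[OF h0(1)]
    proof (intro exI[of _ h0] conjI allI impI)
      fix h assume "0 < h" "h < h0"
      then have "q h \<le> q h0" using young_quot_mono[OF Y, of t h h0] t by (simp add: q_def)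
      then show "dist (q h) L < e" using Lle[OF \<open>0<h\<close>] h0 by (simp add: dist_real_def)
    qed (use h0 in auto)
  qed
  have "right_deriv \<Phi> t = L"
    unfolding right_deriv_def using lim unfolding q_def
    by (intro tendsto_Lim) (auto simp: trivial_limit_at_right_real)
  then show "((\<lambda>h. (\<Phi> (t+h) - \<Phi> t) / h) \<longlongrightarrow> right_deriv \<Phi> t) (at_right 0)"
    and "\<And>h. 0 < h \<Longrightarrow> right_deriv \<Phi> t \<le> (\<Phi> (t+h) - \<Phi> t) / h"
    and "\<And>s. 0 \<le> s \<Longrightarrow> s < t \<Longrightarrow> (\<Phi> t - \<Phi> s) / (t - s) \<le> right_deriv \<Phi> t"
    using lim Lle geL by (auto simp: q_def)
qed



lemma dini_decr:
  fixes f f' :: "real \<Rightarrow> real"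
  assumes xy: "x \<le> y" and cont: "continuous_on {x..y} f"
    and der: "\<And>t. x \<le> t \<Longrightarrow> t < y \<Longrightarrow> (f has_real_derivative f' t) (at t within {t<..})"
    and neg: "\<And>t. x \<le> t \<Longrightarrow> t < y \<Longrightarrow> f' t \<le> 0"
  shows "f y \<le> f x"
proof (rule ccontr)
  assume "\<not> f y \<le> f x"
  then have fy: "f x < f y" by simp
  then have "x < y" using xy by (cases "x = y") auto
  define e where "e = (f y - f x) / (2 * (y - x))"
  have e: "0 < e" using fy \<open>x < y\<close> by (simp add: e_def)
  define S where "S = {s \<in> {x..y}. f s \<le> f x + e * (s - x)}"
  have clS: "closed S" unfolding S_def
    by (intro continuous_on_closed_Collect_le cont continuous_intros)
  have xS: "x \<in> S" using xy by (simp add: S_def)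
  have bdd: "bdd_above S" unfolding S_def bdd_above_def by auto
  define c where "c = Sup S"
  have cS: "c \<in> S" unfolding c_def using closed_contains_Sup[OF _ bdd clS] xS by auto
  have cy: "c \<le> y" "x \<le> c" using cS by (auto simp: S_def)
  have upper: "s \<le> c" if "s \<in> S" for s unfolding c_def using bdd that by (simp add: cSup_upper)
  show False
  proof (cases "c < y")
    case True
    have "((\<lambda>z. (f z - f c) / (z - c)) \<longlongrightarrow> f' c) (at c within {c<..})"
      using der[OF cy(2) True] by (simp add: has_field_derivative_iff)
    moreover have "f' c < e" using neg[OF cy(2) True] e by simp
    ultimately have "\<forall>\<^sub>F z in at_right c. (f z - f c) / (z - c) < e"
      by (rule order_tendstoD)
    then obtain b where b: "b > c" "\<And>z. c < z \<Longrightarrow> z < b \<Longrightarrow> (f z - f c) / (z - c) < e"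
      unfolding eventually_at_right[OF True] by (metis True)
    define z where "z = (c + min b y) / 2"
    have z: "c < z" "z < b" "z \<le> y" using b True by (auto simp: z_def)
    have "(f z - f c) / (z - c) < e" using b(2) z by simp
    then have "f z - f c < e * (z - c)" using z by (simp add: divide_less_eq)
    moreover have "f c \<le> f x + e * (c - x)" using cS by (simp add: S_def)
    ultimately have "f z \<le> f x + e * (z - x)" by (simp add: algebra_simps)
    then have "z \<in> S" using z cy by (simp add: S_def)
    then show False using upper z by fastforce
  next
    case False
    then have "c = y" using cy by simp
    then have "f y \<le> f x + e * (y - x)" using cS by (simp add: S_def)
    also have "e * (y - x) = (f y - f x) / 2" using \<open>x<y\<close> by (simp add: e_def field_simps)
    finally show False using fy by (simp add: field_simps)
  qed
qed

lemma young_cont: "young_function \<Phi> \<Longrightarrow> continuous_on {0<..} \<Phi>"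
  by (rule convex_on_continuous) (auto simp: young_function_def intro: convex_on_subset)

lemma young_has_rd:
  assumes Y: "young_function \<Phi>" and t: "0 < t"
  shows "(\<Phi> has_real_derivative right_deriv \<Phi> t) (at t within {t<..})"
proof -
  have "((\<lambda>h. (\<Phi> (t+h) - \<Phi> t) / h) \<longlongrightarrow> right_deriv \<Phi> t) (at_right 0)"
    by (rule young_rd(1)[OF Y t])
  then have "((\<lambda>h. (\<Phi> (h+t) - \<Phi> t) / ((h + t) - t)) \<longlongrightarrow> right_deriv \<Phi> t) (at_right 0)"
    by (simp add: add.commute)
  then have "((\<lambda>y. (\<Phi> y - \<Phi> t) / (y - t)) \<longlongrightarrow> right_deriv \<Phi> t) (at_right t)"
    by (subst at_right_to_0) (simp add: filterlim_filtermap)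
  then show ?thesis by (simp add: has_field_derivative_iff)
qed

lemma young_growth_upper:
  assumes Y: "young_function \<Phi>" and x: "0 < x" "x \<le> y"
    and r: "\<And>t. x \<le> t \<Longrightarrow> t \<le> y \<Longrightarrow> t * right_deriv \<Phi> t \<le> m * \<Phi> t"
  shows "\<Phi> y * x powr m \<le> \<Phi> x * y powr m"
proof -
  define f where "f t = \<Phi> t * t powr (-m)" for t
  have "f y \<le> f x"
  proof (rule dini_decr[OF x(2), where f' = "\<lambda>t. right_deriv \<Phi> t * t powr (-m) + \<Phi> t * (-m * t powr (-m - 1))"])
    have "continuous_on {x..y} \<Phi>" using young_cont[OF Y] by (rule continuous_on_subset) (use x in auto)
    then show "continuous_on {x..y} f" unfolding f_def using x
      by (intro continuous_intros) auto
  next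
    fix t assume t: "x \<le> t" "t < y"
    then have t0: "0 < t" using x by simp
    show "(f has_real_derivative right_deriv \<Phi> t * t powr (-m) + \<Phi> t * (-m * t powr (-m - 1))) (at t within {t<..})"
      unfolding f_def
      by (rule DERIV_cong[OF DERIV_mult[OF young_has_rd[OF Y t0] has_field_derivative_at_within[OF has_real_derivative_powr[OF t0]]]]) (simp add: algebra_simps)
    have eq: "right_deriv \<Phi> t * t powr (-m) + \<Phi> t * (-m * t powr (-m - 1))
        = t powr (-m - 1) * (t * right_deriv \<Phi> t - m * \<Phi> t)"
      using t0 by (simp add: powr_diff field_simps powr_minus)
    show "right_deriv \<Phi> t * t powr (-m) + \<Phi> t * (-m * t powr (-m - 1)) \<le> 0"
      unfolding eq using r[of t] t by (intro mult_nonneg_nonpos) auto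
  qed
  then have "\<Phi> y * y powr (-m) \<le> \<Phi> x * x powr (-m)" by (simp add: f_def)
  then have "\<Phi> y * y powr (-m) * (x powr m * y powr m) \<le> \<Phi> x * x powr (-m) * (x powr m * y powr m)"
    by (intro mult_right_mono) auto
  then show ?thesis using x by (simp add: powr_minus field_simps)
qed

lemma young_growth_lower:
  assumes Y: "young_function \<Phi>" and x: "0 < x" "x \<le> y"
    and r: "\<And>t. x \<le> t \<Longrightarrow> t \<le> y \<Longrightarrow> m * \<Phi> t \<le> t * right_deriv \<Phi> t"
  shows "\<Phi> x * y powr m \<le> \<Phi> y * x powr m"
proof -
  define f where "f t = - (\<Phi> t * t powr (-m))" for t
  have "f y \<le> f x"
  proof (rule dini_decr[OF x(2), where f' = "\<lambda>t. - (right_deriv \<Phi> t * t powr (-m) + \<Phi> t * (-m * t powr (-m - 1)))"])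
    have "continuous_on {x..y} \<Phi>" using young_cont[OF Y] by (rule continuous_on_subset) (use x in auto)
    then show "continuous_on {x..y} f" unfolding f_def using x
      by (intro continuous_intros) auto
  next
    fix t assume t: "x \<le> t" "t < y"
    then have t0: "0 < t" using x by simp
    show "(f has_real_derivative - (right_deriv \<Phi> t * t powr (-m) + \<Phi> t * (-m * t powr (-m - 1)))) (at t within {t<..})"
      unfolding f_def
      by (rule DERIV_cong[OF DERIV_minus[OF DERIV_mult[OF young_has_rd[OF Y t0] has_field_derivative_at_within[OF has_real_derivative_powr[OF t0]]]]]) (simp add: algebra_simps)
    have eq: "right_deriv \<Phi> t * t powr (-m) + \<Phi> t * (-m * t powr (-m - 1))
        = t powr (-m - 1) * (t * right_deriv \<Phi> t - m * \<Phi> t)"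
      using t0 by (simp add: powr_diff field_simps powr_minus)
    show "- (right_deriv \<Phi> t * t powr (-m) + \<Phi> t * (-m * t powr (-m - 1))) \<le> 0"
      unfolding eq using r[of t] t by (simp add: zero_le_mult_iff)
  qed
  then have "\<Phi> x * x powr (-m) \<le> \<Phi> y * y powr (-m)" by (simp add: f_def)
  then have "\<Phi> x * x powr (-m) * (x powr m * y powr m) \<le> \<Phi> y * y powr (-m) * (x powr m * y powr m)"
    by (intro mult_right_mono) auto
  then show ?thesis using x by (simp add: powr_minus field_simps)
qed



definition Gf :: "real \<Rightarrow> real \<Rightarrow> real \<Rightarrow> real" where
  "Gf a b t = t powr a * (1+t) powr (b - a)"

definition Gd :: "real \<Rightarrow> real \<Rightarrow> real \<Rightarrow> real" where
  "Gd a b t = t powr (a - 1) * (1+t) powr (b - a - 1) * (a + b*t)"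

lemma powr_split1: "0 < (x::real) \<Longrightarrow> x powr c = x powr (c - 1) * x"
  by (simp add: powr_diff)

lemma powr_neg_le1: "1 \<le> (x::real) \<Longrightarrow> c \<le> 0 \<Longrightarrow> x powr c \<le> 1"
  using powr_mono[of c 0 x] by simp

lemma Gf_deriv:
  assumes t: "0 < t"
  shows "(Gf a b has_real_derivative Gd a b t) (at t)"
proof -
  have d1: "((\<lambda>t. 1 + t) has_real_derivative 1) (at t)"
    by (auto intro!: derivative_eq_intros)
  have t1: "0 < 1 + t" using t by simp
  have "((\<lambda>t. t powr a * (1+t) powr (b - a)) has_real_derivative
      (a * t powr (a - 1)) * (1+t) powr (b - a) + ((b - a) * (1+t) powr (b - a - of_nat 1) * 1) * t powr a) (at t)"
    by (rule DERIV_mult[OF has_real_derivative_powr[OF t] DERIV_fun_powr[OF d1 t1]])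
  moreover have "(a * t powr (a - 1)) * (1+t) powr (b - a) + ((b - a) * (1+t) powr (b - a - of_nat 1) * 1) * t powr a
      = Gd a b t"
    unfolding Gd_def
    apply (subst powr_split1[OF t1, of "b - a"])
    apply (subst powr_split1[OF t, of a])
    by (simp add: algebra_simps)
  ultimately show ?thesis unfolding Gf_def[abs_def] by simp
qed

lemma Gf_pos: "0 < t \<Longrightarrow> 0 < Gf a b t"
  by (simp add: Gf_def)

lemma Gf_0: "Gf a b 0 = 0"
  by (simp add: Gf_def)

lemma Gf_nonneg: "0 \<le> t \<Longrightarrow> 0 \<le> Gf a b t"
  by (simp add: Gf_def)

lemma Gf_ratio:
  assumes t: "0 < t"
  shows "t * Gd a b t / Gf a b t = (a + b*t) / (1 + t)"
proof -
  have t1: "0 < 1 + t" using t by simp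
  define X where "X = t powr (a - 1) * (1+t) powr (b - a - 1)"
  have X: "0 < X" using t t1 by (simp add: X_def)
  have "Gf a b t = X * (t * (1 + t))"
    unfolding Gf_def X_def
    by (subst powr_split1[OF t1, of "b - a"], subst powr_split1[OF t, of a]) simp
  moreover have "Gd a b t = X * (a + b * t)" unfolding Gd_def X_def by simp
  moreover have ne: "X * t \<noteq> 0" "1 + t \<noteq> 0" using X t by auto
  ultimately have "t * Gd a b t / Gf a b t = (X*t) * (a+b*t) / ((X*t) * (1+t))"
    by (simp add: ac_simps)
  also have "\<dots> = (a+b*t)/(1+t)" using ne by simp
  finally show ?thesis .
qed

lemma ratio_bounds:
  assumes t: "0 < (t::real)"
  shows "min a b \<le> (a + b*t) / (1 + t)" "(a + b*t) / (1 + t) \<le> max a b"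
proof -
  have t1: "0 < 1 + t" using t by simp
  have "min a b * (1 + t) \<le> a + b * t"
    using t by (cases "a \<le> b") (auto simp: min_def algebra_simps intro: mult_left_mono)
  then show "min a b \<le> (a + b*t) / (1 + t)" using t1 by (simp add: le_divide_eq)
  have "a + b * t \<le> max a b * (1 + t)"
    using t by (cases "a \<le> b") (auto simp: max_def algebra_simps intro: mult_left_mono)
  then show "(a + b*t) / (1 + t) \<le> max a b" using t1 by (simp add: divide_le_eq)
qed

lemma Gd_mono:
  assumes ab: "1 \<le> a" "1 \<le> b" and xy: "0 < x" "x \<le> y"
  shows "Gd a b x \<le> Gd a b y"
proof -
  define h where "h t = (a - 1) * ln t + (b - a - 1) * ln (1 + t) + ln (a + b * t)" for t
  have lnGd: "ln (Gd a b t) = h t" if "0 < t" for t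
  proof -
    have "0 < a + b * t" using ab that by (smt (verit) mult_nonneg_nonneg)
    then show ?thesis using that unfolding Gd_def h_def
      by (simp add: ln_mult ln_powr)
  qed
  have Gdpos: "0 < Gd a b t" if "0 < t" for t
  proof -
    have "0 < a + b * t" using ab that by (smt (verit) mult_nonneg_nonneg)
    then show ?thesis using that unfolding Gd_def by simp
  qed
  have "h x \<le> h y"
  proof (rule DERIV_nonneg_imp_nondecreasing[OF xy(2)])
    fix t assume t: "x \<le> t" "t \<le> y"
    then have t0: "0 < t" using xy by simp
    have p: "0 < a + b * t" using ab t0 by (smt (verit) mult_nonneg_nonneg)
    define P where "P = a * (a - 1) + 2 * a * (b - 1) * t + b * (b - 1) * t^2"
    have P: "0 \<le> P" unfolding P_def using ab t0
      by (intro add_nonneg_nonneg mult_nonneg_nonneg) auto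
    have n: "t \<noteq> 0" "1 + t \<noteq> 0" "a + b * t \<noteq> 0" using t0 p by auto
    have e1: "((a - 1)/t + (b-a-1)/(1+t) + b/(a+b*t)) * (t*(1+t)*(a+b*t)) = (a-1)*((1+t)*(a+b*t)) + (b-a-1)*(t*(a+b*t)) + b*(t*(1+t))"
      using n by (simp add: distrib_right)
    have e2: "(a-1)*((1+t)*(a+b*t)) + (b-a-1)*(t*(a+b*t)) + b*(t*(1+t)) = P"
      unfolding P_def by (simp add: algebra_simps power2_eq_square)
    have D: "0 < t*(1+t)*(a+b*t)" using t0 p by simp
    have "(h has_real_derivative (a - 1) / t + (b - a - 1) / (1 + t) + b / (a + b * t)) (at t)"
      unfolding h_def[abs_def] using t0 p
      by (auto intro!: derivative_eq_intros simp: divide_inverse add_pos_pos)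
    moreover have "0 \<le> (a - 1) / t + (b - a - 1) / (1 + t) + b / (a + b * t)"
    proof -
      have "0 \<le> ((a - 1)/t + (b-a-1)/(1+t) + b/(a+b*t)) * (t*(1+t)*(a+b*t))"
        using P e1 e2 by simp
      then show ?thesis using D by (simp add: zero_le_mult_iff)
    qed
    ultimately show "\<exists>y. (h has_real_derivative y) (at t) \<and> 0 \<le> y" by blast
  qed
  then have "ln (Gd a b x) \<le> ln (Gd a b y)" using lnGd xy by simp
  then show ?thesis using Gdpos xy by simp
qed

lemma Gf_over_t:
  assumes t: "0 < t"
  shows "Gf a b t / t = (t / (1 + t)) powr (a - 1) * (1 + t) powr (b - 1)"
proof -
  have t1: "0 < 1 + t" using t by simp
  have "(t / (1 + t)) powr (a - 1) * (1 + t) powr (b - 1) = t powr (a - 1) * ((1 + t) powr (b - 1) / (1 + t) powr (a - 1))"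
    using t t1 by (simp add: powr_divide)
  also have "(1 + t) powr (b - 1) / (1 + t) powr (a - 1) = (1 + t) powr (b - a)"
    by (simp add: powr_diff[symmetric])
  also have "t powr (a - 1) * (1 + t) powr (b - a) = Gf a b t / t"
    unfolding Gf_def using t by (subst powr_split1[OF t, of a]) simp
  finally show ?thesis by simp
qed

lemma Gf_over_t_mono:
  assumes ab: "1 \<le> a" "1 \<le> b" and xy: "0 < x" "x \<le> y"
  shows "Gf a b x / x \<le> Gf a b y / y"
proof -
  have "x / (1 + x) \<le> y / (1 + y)" using xy by (simp add: field_simps)
  then have 1: "(x / (1 + x)) powr (a - 1) \<le> (y / (1 + y)) powr (a - 1)"
    using ab xy by (intro powr_mono2) auto
  have 2: "(1 + x) powr (b - 1) \<le> (1 + y) powr (b - 1)"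
    using ab xy by (intro powr_mono2) auto
  have y: "0 < y" using xy by simp
  show ?thesis unfolding Gf_over_t[OF xy(1)] Gf_over_t[OF y] using xy
    by (auto intro!: mult_mono 1 2)
qed

lemma Gf_mono:
  assumes ab: "1 \<le> a" "1 \<le> b" and xy: "0 \<le> x" "x \<le> y"
  shows "Gf a b x \<le> Gf a b y"
proof (cases "x = 0")
  case True then show ?thesis using xy by (simp add: Gf_0 Gf_nonneg)
next
  case False
  then have x: "0 < x" using xy by simp
  have "Gf a b x / x * x \<le> Gf a b y / y * y"
    using Gf_over_t_mono[OF ab x xy(2)] x xy Gf_nonneg[of x a b] Gf_nonneg[of y a b]
    by (intro mult_mono) auto
  then show ?thesis using x xy by simp
qed

lemma convex_extend0:
  fixes f :: "real \<Rightarrow> real"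
  assumes cv: "convex_on {0<..} f" and f0: "f 0 = 0"
    and q: "\<And>x y. 0 < x \<Longrightarrow> x \<le> y \<Longrightarrow> f x / x \<le> f y / y"
  shows "convex_on {0..} f"
proof (rule convex_onI)
  show "convex {0::real..}" by simp
next
  fix t x y :: real assume t: "0 < t" "t < 1" and xy: "x \<in> {0..}" "y \<in> {0..}"
  have sc: "f (c * z) \<le> c * f z" if "0 < c" "c < 1" "0 < z" for c z
  proof -
    have "f (c * z) / (c * z) \<le> f z / z" using q[of "c * z" z] that by (simp add: mult_le_cancel_right1)
    then show ?thesis using that by (simp add: field_simps)
  qed
  consider "x = 0" "y = 0" | "x = 0" "y > 0" | "x > 0" "y = 0" | "x > 0" "y > 0"
    using xy by force
  then show "f ((1 - t) *\<^sub>R x + t *\<^sub>R y) \<le> (1 - t) * f x + t * f y"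
  proof cases
    case 1 then show ?thesis using f0 by simp
  next
    case 2 then show ?thesis using f0 sc[of t y] t by simp
  next
    case 3 then show ?thesis using f0 sc[of "1 - t" x] t by simp
  next
    case 4 then show ?thesis using convex_onD[OF cv, of t x y] t by simp
  qed
qed

lemma Gf_convex:
  assumes ab: "1 \<le> a" "1 \<le> b"
  shows "convex_on {0..} (Gf a b)"
proof (rule convex_extend0)
  show "convex_on {0<..} (Gf a b)"
    by (rule convex_on_realI[where f' = "Gd a b"]) (auto intro: Gf_deriv Gd_mono[OF ab] simp: connected_Ioi)
  show "Gf a b 0 = 0" by (rule Gf_0)
  show "\<And>x y. 0 < x \<Longrightarrow> x \<le> y \<Longrightarrow> Gf a b x / x \<le> Gf a b y / y"
    by (rule Gf_over_t_mono[OF ab])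
qed

lemma Gf_le_small:
  assumes t: "0 < t" "t \<le> 1"
  shows "Gf a b t \<le> 2 powr \<bar>b - a\<bar> * t powr a"
proof -
  have "(1 + t) powr (b - a) \<le> 2 powr \<bar>b - a\<bar>"
  proof (cases "0 \<le> b - a")
    case True
    then have "(1 + t) powr (b - a) \<le> 2 powr (b - a)" using t by (intro powr_mono2) auto
    then show ?thesis using True by simp
  next
    case False
    then have "(1 + t) powr (b - a) \<le> 1" using t by (intro powr_neg_le1) auto
    also have "1 \<le> 2 powr \<bar>b - a\<bar>" by (simp add: ge_one_powr_ge_zero)
    finally show ?thesis .
  qed
  then show ?thesis unfolding Gf_def using t by (simp add: mult.commute mult_left_mono)
qed

lemma Gf_le_large:
  assumes t: "1 \<le> t"
  shows "Gf a b t \<le> 2 powr \<bar>b - a\<bar> * t powr b"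
proof -
  have t0: "0 < t" using t by simp
  have eq: "Gf a b t = t powr b * ((1 + t) / t) powr (b - a)"
    unfolding Gf_def using t0 by (simp add: powr_divide powr_diff field_simps)
  have "((1 + t) / t) powr (b - a) \<le> 2 powr \<bar>b - a\<bar>"
  proof (cases "0 \<le> b - a")
    case True
    have "(1 + t) / t \<le> 2" using t by (simp add: field_simps)
    then have "((1 + t) / t) powr (b - a) \<le> 2 powr (b - a)" using t True by (intro powr_mono2) auto
    then show ?thesis using True by simp
  next
    case False
    have "1 \<le> (1 + t) / t" using t by (simp add: field_simps)
    then have "((1 + t) / t) powr (b - a) \<le> 1" using False by (intro powr_neg_le1) auto
    also have "1 \<le> 2 powr \<bar>b - a\<bar>" by (simp add: ge_one_powr_ge_zero)
    finally show ?thesis .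
  qed
  then show ?thesis unfolding eq using t0 by (simp add: mult.commute mult_left_mono)
qed



lemma young_tD_ge:
  assumes Y: "young_function \<Phi>" and t: "0 < t"
  shows "\<Phi> t \<le> t * right_deriv \<Phi> t"
proof -
  have "(\<Phi> t - \<Phi> 0) / (t - 0) \<le> right_deriv \<Phi> t" using young_rd(3)[OF Y t, of 0] t by simp
  then have "\<Phi> t / t \<le> right_deriv \<Phi> t" using young_zero[OF Y] by simp
  then show ?thesis using t by (simp add: pos_divide_le_eq mult.commute)
qed

lemma young_D_nonneg:
  assumes Y: "young_function \<Phi>" and t: "0 < t"
  shows "0 \<le> right_deriv \<Phi> t"
proof -
  have "0 \<le> t * right_deriv \<Phi> t" using young_tD_ge[OF Y t] young_pos[OF Y t] by simp
  then show ?thesis using t by (simp add: zero_le_mult_iff)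
qed

lemma young_D_mono:
  assumes Y: "young_function \<Phi>" and st: "0 < s" "s \<le> t"
  shows "right_deriv \<Phi> s \<le> right_deriv \<Phi> t"
proof (cases "s = t")
  case False
  then have st': "s < t" using st by simp
  have "right_deriv \<Phi> s \<le> (\<Phi> (s + (t - s)) - \<Phi> s) / (t - s)"
    using young_rd(2)[OF Y st(1), of "t - s"] st' by simp
  also have "\<dots> = (\<Phi> t - \<Phi> s) / (t - s)" by simp
  also have "\<dots> \<le> right_deriv \<Phi> t" using young_rd(3)[OF Y _ _ st'] st st' by simp
  finally show ?thesis .
qed simp

lemma rd_sum:
  assumes Y: "young_function \<Phi>" and t: "0 < t"
  shows "right_deriv (\<lambda>t. \<Phi> t + K * Gf a b t) t = right_deriv \<Phi> t + K * Gd a b t"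
proof -
  have 1: "((\<lambda>h. (\<Phi> (t+h) - \<Phi> t) / h) \<longlongrightarrow> right_deriv \<Phi> t) (at_right 0)"
    by (rule young_rd(1)[OF Y t])
  have "((\<lambda>h. (Gf a b (t+h) - Gf a b t) / h) \<longlongrightarrow> Gd a b t) (at 0)"
    using Gf_deriv[OF t, of a b] unfolding DERIV_def .
  then have 2: "((\<lambda>h. (Gf a b (t+h) - Gf a b t) / h) \<longlongrightarrow> Gd a b t) (at_right 0)"
    by (rule tendsto_within_subset) auto
  have 3: "((\<lambda>h. (\<Phi> (t+h) - \<Phi> t) / h + K * ((Gf a b (t+h) - Gf a b t) / h)) \<longlongrightarrow>
      right_deriv \<Phi> t + K * Gd a b t) (at_right 0)"
    by (intro tendsto_add 1 tendsto_mult tendsto_const 2)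
  have eq: "(\<Phi> (t+h) + K * Gf a b (t+h) - (\<Phi> t + K * Gf a b t)) / h =
      (\<Phi> (t+h) - \<Phi> t) / h + K * ((Gf a b (t+h) - Gf a b t) / h)" for h
  proof -
    have "(\<Phi> (t+h) + K * Gf a b (t+h) - (\<Phi> t + K * Gf a b t)) = (\<Phi> (t+h) - \<Phi> t) + K * (Gf a b (t+h) - Gf a b t)"
      by (simp add: algebra_simps)
    then show ?thesis by (simp only: add_divide_distrib times_divide_eq_right)
  qed
  have "Lim (at_right 0) (\<lambda>h. (\<Phi> (t+h) + K * Gf a b (t+h) - (\<Phi> t + K * Gf a b t)) / h) = right_deriv \<Phi> t + K * Gd a b t"
    unfolding eq by (rule tendsto_Lim) (use 3 in \<open>auto simp: trivial_limit_at_right_real\<close>)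
  then show ?thesis by (simp add: right_deriv_def[of "\<lambda>t. \<Phi> t + K * Gf a b t"])
qed

lemma mediant:
  fixes u v x y L U :: real
  assumes "0 < u" "0 \<le> v" "L \<le> x" "x \<le> U" "L \<le> y" "y \<le> U"
  shows "L \<le> (u * x + v * y) / (u + v)" "(u * x + v * y) / (u + v) \<le> U"
proof -
  have uv: "0 < u + v" using assms by simp
  have "L * u \<le> x * u" "L * v \<le> y * v" using assms by (auto intro: mult_right_mono)
  then have "L * (u + v) \<le> u * x + v * y" by (simp add: algebra_simps)
  then show "L \<le> (u * x + v * y) / (u + v)" using uv by (simp add: le_divide_eq)
  have "x * u \<le> U * u" "y * v \<le> U * v" using assms by (auto intro: mult_right_mono)
  then have "u * x + v * y \<le> U * (u + v)" by (simp add: algebra_simps)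
  then show "(u * x + v * y) / (u + v) \<le> U" using uv by (simp add: divide_le_eq)
qed

lemma sup_part:
  fixes R :: "real \<Rightarrow> real"
  assumes le: "\<And>t. 0 < t \<Longrightarrow> R t \<le> U"
    and l0: "(R \<longlongrightarrow> p0) (at_right 0)" and li: "(R \<longlongrightarrow> pinf) at_top"
  shows "ereal (max p0 pinf) \<le> (SUP t\<in>{0<..}. ereal (R t))"
    and "(SUP t\<in>{0<..}. ereal (R t)) \<le> ereal U"
proof -
  let ?S = "(SUP t\<in>{0<..}. ereal (R t))"
  have up: "ereal (R t) \<le> ?S" if "0 < t" for t using that by (intro SUP_upper) auto
  have "ereal p0 \<le> ?S"
  proof (rule tendsto_le[of "at_right 0"])
    show "((\<lambda>t. ereal (R t)) \<longlongrightarrow> ereal p0) (at_right 0)" using l0 by (rule tendsto_ereal)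
    show "((\<lambda>t. ?S) \<longlongrightarrow> ?S) (at_right 0)" by simp
    show "\<forall>\<^sub>F t in at_right 0. ereal (R t) \<le> ?S"
      using eventually_at_right_less[of 0] by eventually_elim (rule up)
  qed (simp add: trivial_limit_at_right_real)
  moreover have "ereal pinf \<le> ?S"
  proof (rule tendsto_le[of at_top])
    show "((\<lambda>t. ereal (R t)) \<longlongrightarrow> ereal pinf) at_top" using li by (rule tendsto_ereal)
    show "((\<lambda>t. ?S) \<longlongrightarrow> ?S) at_top" by simp
    show "\<forall>\<^sub>F t in at_top. ereal (R t) \<le> ?S"
      using eventually_gt_at_top[of 0] by eventually_elim (rule up)
  qed simp
  ultimately show "ereal (max p0 pinf) \<le> ?S" by (simp add: max_def)
  show "?S \<le> ereal U" using le by (intro SUP_least) auto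
qed

lemma inf_part:
  fixes R :: "real \<Rightarrow> real"
  assumes le: "\<And>t. 0 < t \<Longrightarrow> L \<le> R t"
    and l0: "(R \<longlongrightarrow> p0) (at_right 0)" and li: "(R \<longlongrightarrow> pinf) at_top"
  shows "(INF t\<in>{0<..}. ereal (R t)) \<le> ereal (min p0 pinf)"
    and "ereal L \<le> (INF t\<in>{0<..}. ereal (R t))"
proof -
  let ?S = "(INF t\<in>{0<..}. ereal (R t))"
  have up: "?S \<le> ereal (R t)" if "0 < t" for t using that by (intro INF_lower) auto
  have "?S \<le> ereal p0"
  proof (rule tendsto_le[of "at_right 0"])
    show "((\<lambda>t. ereal (R t)) \<longlongrightarrow> ereal p0) (at_right 0)" using l0 by (rule tendsto_ereal)
    show "((\<lambda>t. ?S) \<longlongrightarrow> ?S) (at_right 0)" by simp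
    show "\<forall>\<^sub>F t in at_right 0. ?S \<le> ereal (R t)"
      using eventually_at_right_less[of 0] by eventually_elim (rule up)
  qed (simp add: trivial_limit_at_right_real)
  moreover have "?S \<le> ereal pinf"
  proof (rule tendsto_le[of at_top])
    show "((\<lambda>t. ereal (R t)) \<longlongrightarrow> ereal pinf) at_top" using li by (rule tendsto_ereal)
    show "((\<lambda>t. ?S) \<longlongrightarrow> ?S) at_top" by simp
    show "\<forall>\<^sub>F t in at_top. ?S \<le> ereal (R t)"
      using eventually_gt_at_top[of 0] by eventually_elim (rule up)
  qed simp
  ultimately show "?S \<le> ereal (min p0 pinf)" by (simp add: min_def)
  show "ereal L \<le> ?S" using le by (intro INF_greatest) auto
qed

lemma ratio_bound:
  fixes g c tb P Pb T B :: real
  assumes "0 < P" "0 < Pb" "0 < T" "0 \<le> g" "g \<le> c * tb" "Pb * T \<le> P * B" "0 \<le> c" "0 \<le> tb"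
  shows "g / P \<le> (c * B / Pb) * (tb / T)"
proof -
  have "g / P \<le> c * tb / P" using assms by (intro divide_right_mono) auto
  also have "\<dots> = (c * tb) * (1 / P)" by simp
  also have "1 / P \<le> B / (Pb * T)"
    using assms by (simp add: divide_simps mult.commute)
  then have "(c * tb) * (1 / P) \<le> (c * tb) * (B / (Pb * T))"
    using assms by (intro mult_left_mono) auto
  also have "(c * tb) * (B / (Pb * T)) = (c * B / Pb) * (tb / T)" by simp
  finally show ?thesis .
qed



theorem mainTheorem11:
  fixes \<Phi> :: "real \<Rightarrow> real" and p0 pinf :: real
  assumes "young_function \<Phi>"
    and "((\<lambda>t. t * right_deriv \<Phi> t / \<Phi> t) \<longlongrightarrow> p0) (at_right 0)"
    and "((\<lambda>t. t * right_deriv \<Phi> t / \<Phi> t) \<longlongrightarrow> pinf) at_top"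
  shows "\<forall>\<epsilon>>0. \<exists>\<Psi>. young_function \<Psi> \<and> young_equiv \<Phi> \<Psi> \<and>
           ereal (max p0 pinf) \<le> upper_index \<Psi> \<and> upper_index \<Psi> < ereal (max p0 pinf + \<epsilon>) \<and>
           ereal (min p0 pinf - \<epsilon>) < lower_index \<Psi> \<and> lower_index \<Psi> \<le> ereal (min p0 pinf)"
proof (intro allI impI)
  fix \<epsilon> :: real assume \<epsilon>: "0 < \<epsilon>"
  note Y = assms(1)
  define r where "r t = t * right_deriv \<Phi> t / \<Phi> t" for t
  have rl0: "(r \<longlongrightarrow> p0) (at_right 0)" using assms(2) unfolding r_def[abs_def] .
  have rlI: "(r \<longlongrightarrow> pinf) at_top" using assms(3) unfolding r_def[abs_def] .
  have \<Phi>pos: "0 < \<Phi> t" if "0 < t" for t using young_pos[OF Y that] .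
  have tD: "t * right_deriv \<Phi> t = \<Phi> t * r t" if "0 < t" for t
    using \<Phi>pos[OF that] by (simp add: r_def)
  have r1: "1 \<le> r t" if "0 < t" for t
    using young_tD_ge[OF Y that] \<Phi>pos[OF that] by (simp add: r_def le_divide_eq)
  have ev0: "\<forall>\<^sub>F t in at_right 0. 0 < (t::real)" by (rule eventually_at_right_less)
  have p0_1: "1 \<le> p0"
    using tendsto_lowerbound[OF rl0 eventually_mono[OF ev0 r1]] by (simp add: trivial_limit_at_right_real)
  have pI_1: "1 \<le> pinf"
    using tendsto_lowerbound[OF rlI eventually_mono[OF eventually_gt_at_top[of 0] r1]] by simp
  define \<delta> where "\<delta> = \<epsilon> / 2"
  have \<delta>: "0 < \<delta>" using \<epsilon> by (simp add: \<delta>_def)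
  define \<alpha> where "\<alpha> = p0 + \<delta>"
  define \<beta> where "\<beta> = max 1 (pinf - \<delta>)"
  define \<gamma>0 where "\<gamma>0 = p0 + \<delta>/2"
  define \<gamma>1 where "\<gamma>1 = (\<beta> + pinf) / 2"
  have \<alpha>1: "1 \<le> \<alpha>" using p0_1 \<delta> by (simp add: \<alpha>_def)
  have \<beta>1: "1 \<le> \<beta>" by (simp add: \<beta>_def)
  have \<beta>p: "\<beta> \<le> pinf" using pI_1 \<delta> by (simp add: \<beta>_def)
  have \<beta>p2: "pinf - \<delta> \<le> \<beta>" by (simp add: \<beta>_def)

  have \<delta>2: "0 < \<delta>/2" using \<delta> by simp
  have "\<forall>\<^sub>F t in at_right 0. dist (r t) p0 < \<delta>/2" using tendstoD[OF rl0 \<delta>2] .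
  then have "\<exists>b0>0. \<forall>t>0. t < b0 \<longrightarrow> dist (r t) p0 < \<delta>/2"
    by (simp add: eventually_at_right[OF zero_less_one])
  then obtain b0 where b0: "b0 > 0" "\<And>t. 0 < t \<Longrightarrow> t < b0 \<Longrightarrow> dist (r t) p0 < \<delta>/2" by blast
  define a where "a = min 1 (b0/2)"
  have a: "0 < a" "a \<le> 1" "a < b0" using b0 by (auto simp: a_def)
  have ra: "\<bar>r t - p0\<bar> < \<delta>/2" if "0 < t" "t \<le> a" for t
    using b0(2)[of t] that a by (simp add: dist_real_def)

  have ev1: "\<forall>\<^sub>F t in at_top. dist (r t) pinf < \<delta>/2" using tendstoD[OF rlI \<delta>2] .
  have ev2: "\<forall>\<^sub>F t in at_top. \<beta> < pinf \<longrightarrow> \<gamma>1 < r t"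
  proof (cases "\<beta> < pinf")
    case True
    then have "\<gamma>1 < pinf" by (simp add: \<gamma>1_def)
    then show ?thesis using order_tendstoD(1)[OF rlI] by (auto elim: eventually_mono)
  qed simp
  obtain N where N: "\<And>t. N \<le> t \<Longrightarrow> dist (r t) pinf < \<delta>/2 \<and> (\<beta> < pinf \<longrightarrow> \<gamma>1 < r t)"
    using eventually_conj[OF ev1 ev2] unfolding eventually_at_top_linorder by blast
  define b where "b = max 1 N"
  have b: "1 \<le> b" "a \<le> b" "0 < b" using a by (auto simp: b_def)
  have rb: "\<bar>r t - pinf\<bar> < \<delta>/2" if "b \<le> t" for t
    using N[of t] that by (simp add: b_def dist_real_def)
  have rb2: "\<gamma>1 < r t" if "\<beta> < pinf" "b \<le> t" for t
    using N[of t] that by (simp add: b_def)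

  have g0: "\<Phi> a * t powr \<gamma>0 \<le> \<Phi> t * a powr \<gamma>0" if "0 < t" "t \<le> a" for t
  proof (rule young_growth_upper[OF Y that])
    fix s assume s: "t \<le> s" "s \<le> a"
    then have s0: "0 < s" using that by simp
    have "r s \<le> \<gamma>0" using ra[OF s0 s(2)] abs_less_iff[of "r s - p0" "\<delta>/2"] unfolding \<gamma>0_def by linarith
    then have "\<Phi> s * r s \<le> \<Phi> s * \<gamma>0" using \<Phi>pos[OF s0] by (intro mult_left_mono) auto
    then show "s * right_deriv \<Phi> s \<le> \<gamma>0 * \<Phi> s" using tD[OF s0] by (simp add: mult.commute)
  qed
  have gI: "\<Phi> b * t powr m \<le> \<Phi> t * b powr m" if "b \<le> t" "\<And>s. b \<le> s \<Longrightarrow> m \<le> r s" for t m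
  proof (rule young_growth_lower[OF Y b(3) that(1)])
    fix s assume s: "b \<le> s" "s \<le> t"
    then have s0: "0 < s" using b by simp
    have "m * \<Phi> s \<le> r s * \<Phi> s" using that(2)[OF s(1)] \<Phi>pos[OF s0] by (intro mult_right_mono) auto
    then show "m * \<Phi> s \<le> s * right_deriv \<Phi> s" using tD[OF s0] by (simp add: mult.commute)
  qed
  have r\<beta>: "\<beta> \<le> r s" if "b \<le> s" for s
  proof -
    have "0 < s" using that b by simp
    then have "1 \<le> r s" by (rule r1)
    moreover have "pinf - \<delta> \<le> r s" using rb[OF that] abs_less_iff[of "r s - pinf" "\<delta>/2"] \<delta> by linarith
    ultimately show ?thesis by (simp add: \<beta>_def)
  qed
  have gIb: "\<Phi> b * t powr \<beta> \<le> \<Phi> t * b powr \<beta>" if "b \<le> t" for t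
    using gI[OF that r\<beta>] .
  have gI1: "\<Phi> b * t powr \<gamma>1 \<le> \<Phi> t * b powr \<gamma>1" if "\<beta> < pinf" "b \<le> t" for t
    using gI[OF that(2), of \<gamma>1] rb2[OF that(1)] by (auto intro: less_imp_le)

  define G where "G = Gf \<alpha> \<beta>"
  define CG where "CG = (2::real) powr \<bar>\<beta> - \<alpha>\<bar>"
  have CG: "0 \<le> CG" by (simp add: CG_def)
  have Gpos: "0 < G t" if "0 < t" for t using Gf_pos[OF that] by (simp add: G_def)
  have G0: "G 0 = 0" by (simp add: G_def Gf_0)
  have Gnn: "0 \<le> G t" if "0 \<le> t" for t using Gf_nonneg[OF that] by (simp add: G_def)
  have Gmono: "G x \<le> G y" if "0 \<le> x" "x \<le> y" for x y
    using Gf_mono[OF \<alpha>1 \<beta>1 that] by (simp add: G_def)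
  define \<sigma> where "\<sigma> t = (\<alpha> + \<beta> * t) / (1 + t)" for t
  have tGd: "t * Gd \<alpha> \<beta> t = G t * \<sigma> t" if "0 < t" for t
    using Gf_ratio[OF that, of \<alpha> \<beta>] Gpos[OF that] by (simp add: G_def \<sigma>_def field_simps)
  have \<sigma>L: "min p0 pinf - \<delta> \<le> \<sigma> t" if "0 < t" for t
    using ratio_bounds(1)[OF that, of \<alpha> \<beta>] \<beta>p2 \<delta> by (simp add: \<sigma>_def \<alpha>_def min_def split: if_splits)
  have \<sigma>U: "\<sigma> t \<le> max p0 pinf + \<delta>" if "0 < t" for t
    using ratio_bounds(2)[OF that, of \<alpha> \<beta>] \<beta>p \<delta> by (simp add: \<sigma>_def \<alpha>_def max_def split: if_splits)
  have \<sigma>U': "\<sigma> t \<le> max \<alpha> \<beta>" if "0 < t" for t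
    using ratio_bounds(2)[OF that, of \<alpha> \<beta>] by (simp add: \<sigma>_def)
  have \<sigma>0: "0 \<le> \<sigma> t" if "0 < t" for t
    using ratio_bounds(1)[OF that, of \<alpha> \<beta>] \<alpha>1 \<beta>1 by (simp add: \<sigma>_def)

  define E0 where "E0 = CG * a powr \<gamma>0 / \<Phi> a"
  have E0: "0 \<le> E0" using CG \<Phi>pos[OF a(1)] by (simp add: E0_def)
  have G_small: "G t \<le> E0 * \<Phi> t * t powr (\<delta>/2)" if t: "0 < t" "t \<le> a" for t
  proof -
    have "G t \<le> CG * t powr \<alpha>" using Gf_le_small[of t \<alpha> \<beta>] t a by (simp add: G_def CG_def)
    also have "t powr \<alpha> = t powr \<gamma>0 * t powr (\<delta>/2)"
      by (simp add: \<alpha>_def \<gamma>0_def powr_add[symmetric] add.commute)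
    also have "t powr \<gamma>0 \<le> \<Phi> t * a powr \<gamma>0 / \<Phi> a"
      using g0[OF t] \<Phi>pos[OF a(1)] by (simp add: le_divide_eq mult.commute)
    finally have "G t \<le> CG * ((\<Phi> t * a powr \<gamma>0 / \<Phi> a) * t powr (\<delta>/2))"
      using CG by (simp add: mult_left_mono mult_right_mono)
    then show ?thesis by (simp add: E0_def field_simps)
  qed
  have tp1: "t powr (\<delta>/2) \<le> 1" if "0 < t" "t \<le> 1" for t
    using powr_mono'[of 0 "\<delta>/2" t] that \<delta> by simp
  define E1 where "E1 = G b / \<Phi> a"
  have E1: "0 \<le> E1" using Gnn[of b] b \<Phi>pos[OF a(1)] by (simp add: E1_def)
  have G_mid: "G t \<le> E1 * \<Phi> t" if t: "a \<le> t" "t \<le> b" for t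
  proof -
    have "G t \<le> G b" using Gmono[of t b] t a by simp
    also have "G b = E1 * \<Phi> a" using \<Phi>pos[OF a(1)] by (simp add: E1_def)
    also have "E1 * \<Phi> a \<le> E1 * \<Phi> t" using young_mono[OF Y, of a t] a t E1 by (intro mult_left_mono) auto
    finally show ?thesis .
  qed
  define E2 where "E2 = CG * b powr \<beta> / \<Phi> b"
  have E2: "0 \<le> E2" using CG \<Phi>pos[OF b(3)] by (simp add: E2_def)
  have G_large: "G t \<le> E2 * \<Phi> t" if t: "b \<le> t" for t
  proof -
    have "G t \<le> CG * t powr \<beta>" using Gf_le_large[of t \<alpha> \<beta>] t b by (simp add: G_def CG_def)
    also have "t powr \<beta> \<le> \<Phi> t * b powr \<beta> / \<Phi> b"
      using gIb[OF t] \<Phi>pos[OF b(3)] by (simp add: le_divide_eq mult.commute)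
    finally have "G t \<le> CG * (\<Phi> t * b powr \<beta> / \<Phi> b)" using CG by (simp add: mult_left_mono)
    then show ?thesis by (simp add: E2_def field_simps)
  qed
  define E where "E = E0 + E1 + E2"
  have G_le: "G t \<le> E * \<Phi> t" if t: "0 \<le> t" for t
  proof (cases "t = 0")
    case True then show ?thesis using G0 young_zero[OF Y] by simp
  next
    case False
    then have t0: "0 < t" using t by simp
    have P: "0 \<le> \<Phi> t" using \<Phi>pos[OF t0] by simp
    have "G t \<le> E0 * \<Phi> t \<or> G t \<le> E1 * \<Phi> t \<or> G t \<le> E2 * \<Phi> t"
    proof (cases "t \<le> a")
      case True
      have "G t \<le> E0 * \<Phi> t * t powr (\<delta>/2)" by (rule G_small[OF t0 True])
      also have "\<dots> \<le> E0 * \<Phi> t * 1" using tp1[of t] True a E0 P t0 by (intro mult_left_mono) auto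
      finally show ?thesis by simp
    next
      case False
      then show ?thesis using G_mid[of t] G_large[of t] by (cases "t \<le> b") auto
    qed
    moreover have "E0 * \<Phi> t \<le> E * \<Phi> t" "E1 * \<Phi> t \<le> E * \<Phi> t" "E2 * \<Phi> t \<le> E * \<Phi> t"
      using E0 E1 E2 P by (auto simp: E_def intro!: mult_right_mono)
    ultimately show ?thesis by linarith
  qed
  have Eg: "0 \<le> E" using E0 E1 E2 by (simp add: E_def)

  define NN where "NN = b * right_deriv \<Phi> b + max \<alpha> \<beta> * \<Phi> b"
  have NN: "0 \<le> NN" using young_D_nonneg[OF Y b(3)] b \<Phi>pos[OF b(3)] \<alpha>1
    by (simp add: NN_def)
  have Ga: "0 < G a" using Gpos[OF a(1)] .
  define K where "K = 2 * NN / (\<delta> * G a) + 1"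
  have K: "0 < K" using NN \<delta> Ga by (simp add: K_def add_nonneg_pos)
  have KGa: "NN \<le> \<delta>/2 * (K * G a)"
  proof -
    have "\<delta>/2 * (K * G a) = NN + \<delta>/2 * G a" using \<delta> Ga by (simp add: K_def field_simps)
    then show ?thesis using \<delta> Ga by simp
  qed

  define \<Psi> where "\<Psi> = (\<lambda>t. \<Phi> t + K * G t)"
  have \<Psi>eq: "\<Psi> = (\<lambda>t. \<Phi> t + K * Gf \<alpha> \<beta> t)" by (simp add: \<Psi>_def G_def)
  have rd\<Psi>: "right_deriv \<Psi> t = right_deriv \<Phi> t + K * Gd \<alpha> \<beta> t" if "0 < t" for t
    unfolding \<Psi>eq by (rule rd_sum[OF Y that])
  define R where "R t = t * right_deriv \<Psi> t / \<Psi> t" for t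
  have R_eq: "R t = (\<Phi> t * r t + (K * G t) * \<sigma> t) / (\<Phi> t + K * G t)" if "0 < t" for t
  proof -
    have "t * right_deriv \<Psi> t = t * right_deriv \<Phi> t + K * (t * Gd \<alpha> \<beta> t)"
      using rd\<Psi>[OF that] by (simp add: algebra_simps)
    also have "\<dots> = \<Phi> t * r t + (K * G t) * \<sigma> t" using tD[OF that] tGd[OF that] by simp
    finally show ?thesis by (simp add: R_def \<Psi>_def)
  qed

  have R_bounds: "min p0 pinf - 3*\<delta>/2 \<le> R t \<and> R t \<le> max p0 pinf + 3*\<delta>/2" if t0: "0 < t" for t
  proof -
    have u: "0 < \<Phi> t" using \<Phi>pos[OF t0] .
    have v: "0 \<le> K * G t" using K Gpos[OF t0] by simp
    have sL: "min p0 pinf - 3*\<delta>/2 \<le> \<sigma> t" using \<sigma>L[OF t0] \<delta> by simp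
    have sU: "\<sigma> t \<le> max p0 pinf + 3*\<delta>/2" using \<sigma>U[OF t0] \<delta> by simp
    consider "t \<le> a" | "b \<le> t" | "a < t" "t < b" by linarith
    then show ?thesis
    proof cases
      case 1
      have "min p0 pinf - 3*\<delta>/2 \<le> r t" "r t \<le> max p0 pinf + 3*\<delta>/2"
        using ra[OF t0 1] \<delta> abs_less_iff[of "r t - p0" "\<delta>/2"] min.cobounded1[of p0 pinf] max.cobounded1[of p0 pinf] by linarith+
      then show ?thesis unfolding R_eq[OF t0] using mediant[OF u v _ _ sL sU] by blast
    next
      case 2
      have "min p0 pinf - 3*\<delta>/2 \<le> r t" "r t \<le> max p0 pinf + 3*\<delta>/2"
        using rb[OF 2] \<delta> abs_less_iff[of "r t - pinf" "\<delta>/2"] min.cobounded2[of p0 pinf] max.cobounded2[of p0 pinf] by linarith+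
      then show ?thesis unfolding R_eq[OF t0] using mediant[OF u v _ _ sL sU] by blast
    next
      case 3
      define uu where "uu = \<Phi> t"
      define vv where "vv = K * G t"
      have uv: "0 < uu + vv" using u v by (simp add: uu_def vv_def)
      have vG: "K * G a \<le> vv" unfolding vv_def using Gmono[of a t] a 3 K by (intro mult_left_mono) auto
      have ur: "uu * r t \<le> NN"
      proof -
        have "uu * r t = t * right_deriv \<Phi> t" using tD[OF t0] by (simp add: uu_def)
        also have "\<dots> \<le> b * right_deriv \<Phi> b"
          using young_D_mono[OF Y t0, of b] young_D_nonneg[OF Y t0] 3 t0 by (intro mult_mono) auto
        also have "\<dots> \<le> NN" using \<Phi>pos[OF b(3)] \<alpha>1 by (simp add: NN_def)
        finally show ?thesis .
      qed
      have ur0: "0 \<le> uu * r t" using u r1[OF t0] by (simp add: uu_def)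
      have us: "\<sigma> t * uu \<le> NN"
      proof -
        have "\<sigma> t * uu \<le> max \<alpha> \<beta> * \<Phi> b"
          using \<sigma>U'[OF t0] \<sigma>0[OF t0] young_mono[OF Y, of t b] 3 t0 u \<alpha>1
          by (intro mult_mono) (auto simp: uu_def)
        also have "\<dots> \<le> NN" using young_D_nonneg[OF Y b(3)] b by (simp add: NN_def)
        finally show ?thesis .
      qed
      have us0: "0 \<le> \<sigma> t * uu" using \<sigma>0[OF t0] u by (simp add: uu_def)
      have half: "NN \<le> \<delta>/2 * (uu + vv)"
      proof -
        have "\<delta>/2 * (K * G a) \<le> \<delta>/2 * vv" using vG \<delta> by simp
        moreover have "0 \<le> \<delta>/2 * uu" using u \<delta> by (simp add: uu_def)
        ultimately show ?thesis using KGa by (simp add: distrib_left)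
      qed
      have up: "uu * r t + vv * \<sigma> t \<le> (\<sigma> t + \<delta>/2) * (uu + vv)"
      proof -
        have "(\<sigma> t + \<delta>/2) * (uu + vv) = \<sigma> t * uu + vv * \<sigma> t + \<delta>/2 * (uu + vv)"
          by (simp add: algebra_simps)
        then show ?thesis using ur us0 half by linarith
      qed
      have lo: "(\<sigma> t - \<delta>/2) * (uu + vv) \<le> uu * r t + vv * \<sigma> t"
      proof -
        have "(\<sigma> t - \<delta>/2) * (uu + vv) = \<sigma> t * uu + vv * \<sigma> t - \<delta>/2 * (uu + vv)"
          by (simp add: algebra_simps)
        then show ?thesis using us ur0 half by linarith
      qed
      have R': "R t = (uu * r t + vv * \<sigma> t) / (uu + vv)" unfolding R_eq[OF t0] uu_def vv_def by simp
      have "R t \<le> \<sigma> t + \<delta>/2" unfolding R' using up uv by (simp add: divide_le_eq)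
      moreover have "\<sigma> t - \<delta>/2 \<le> R t" unfolding R' using lo uv by (simp add: le_divide_eq)
      ultimately show ?thesis using \<sigma>L[OF t0] \<sigma>U[OF t0] by linarith
    qed
  qed

  have Rr: "\<bar>R t - r t\<bar> \<le> K * (G t / \<Phi> t) * (max \<alpha> \<beta> + \<bar>r t\<bar>)" if t0: "0 < t" for t
  proof -
    have u: "0 < \<Phi> t" using \<Phi>pos[OF t0] .
    have v: "0 \<le> K * G t" using K Gpos[OF t0] by simp
    have "R t - r t = (K * G t) * (\<sigma> t - r t) / (\<Phi> t + K * G t)"
      unfolding R_eq[OF t0] using u v by (simp add: field_simps)
    then have "\<bar>R t - r t\<bar> = (K * G t) * \<bar>\<sigma> t - r t\<bar> / (\<Phi> t + K * G t)"
      using u v K Gpos[OF t0] by (simp add: abs_mult)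
    also have "\<dots> \<le> (K * G t) * \<bar>\<sigma> t - r t\<bar> / \<Phi> t"
      using u v K Gpos[OF t0] by (intro divide_left_mono mult_nonneg_nonneg mult_pos_pos add_pos_pos) auto
    also have "\<bar>\<sigma> t - r t\<bar> \<le> max \<alpha> \<beta> + \<bar>r t\<bar>" using \<sigma>U'[OF t0] \<sigma>0[OF t0] by linarith
    then have "(K * G t) * \<bar>\<sigma> t - r t\<bar> / \<Phi> t \<le> (K * G t) * (max \<alpha> \<beta> + \<bar>r t\<bar>) / \<Phi> t"
      using u v by (intro divide_right_mono mult_left_mono) auto
    finally show ?thesis by (simp add: field_simps)
  qed

  have R0: "(R \<longlongrightarrow> p0) (at_right 0)"
  proof -
    define M0 where "M0 = K * E0 * (max \<alpha> \<beta> + p0 + \<delta>)"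
    have "((\<lambda>t. R t - r t) \<longlongrightarrow> 0) (at_right 0)"
    proof (rule Lim_null_comparison)
      show "\<forall>\<^sub>F t in at_right 0. norm (R t - r t) \<le> M0 * t powr (\<delta>/2)"
      proof (rule eventually_at_rightI[OF _ a(1)])
        fix t assume "t \<in> {0<..<a}"
        then have t0: "0 < t" and ta: "t \<le> a" by auto
        have "G t / \<Phi> t \<le> E0 * t powr (\<delta>/2)" using G_small[OF t0 ta] \<Phi>pos[OF t0]
          by (simp add: divide_le_eq mult.commute mult.left_commute)
        moreover have "max \<alpha> \<beta> + \<bar>r t\<bar> \<le> max \<alpha> \<beta> + p0 + \<delta>"
          using ra[OF t0 ta] \<delta> abs_less_iff[of "r t - p0" "\<delta>/2"] r1[OF t0] by (simp add: abs_of_nonneg)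
        moreover have "0 \<le> G t / \<Phi> t" using Gpos[OF t0] \<Phi>pos[OF t0] by simp
        moreover have "0 \<le> max \<alpha> \<beta> + \<bar>r t\<bar>" using \<alpha>1 by linarith
        ultimately have "K * (G t / \<Phi> t) * (max \<alpha> \<beta> + \<bar>r t\<bar>) \<le> K * (E0 * t powr (\<delta>/2)) * (max \<alpha> \<beta> + p0 + \<delta>)"
          using K by (intro mult_mono mult_left_mono) auto
        then show "norm (R t - r t) \<le> M0 * t powr (\<delta>/2)"
          using Rr[OF t0] by (simp add: M0_def algebra_simps)
      qed
      have "((\<lambda>t. t powr (\<delta>/2)) \<longlongrightarrow> 0) (at_right (0::real))"
        by (rule tendsto_zero_powrI[where f="\<lambda>t. t" and g="\<lambda>_. \<delta>/2" and b="\<delta>/2"]) (use \<delta> ev0 in \<open>auto elim: eventually_mono\<close>)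
      then show "((\<lambda>t. M0 * t powr (\<delta>/2)) \<longlongrightarrow> 0) (at_right 0)"
        using tendsto_mult[OF tendsto_const[of M0]] by fastforce
    qed
    from tendsto_add[OF rl0 this] show ?thesis by simp
  qed

  have RI: "(R \<longlongrightarrow> pinf) at_top"
  proof (cases "\<beta> < pinf")
    case True
    define M1 where "M1 = K * (CG * b powr \<gamma>1 / \<Phi> b) * (max \<alpha> \<beta> + pinf + \<delta>)"
    have "((\<lambda>t. R t - r t) \<longlongrightarrow> 0) at_top"
    proof (rule Lim_null_comparison)
      show "\<forall>\<^sub>F t in at_top. norm (R t - r t) \<le> M1 * t powr (\<beta> - \<gamma>1)"
        unfolding eventually_at_top_linorder
      proof (intro exI[of _ b] allI impI)
        fix t assume tb: "b \<le> t"
        then have t0: "0 < t" using b by simp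
        have "G t \<le> CG * t powr \<beta>" using Gf_le_large[of t \<alpha> \<beta>] tb b by (simp add: G_def CG_def)
        moreover have "\<Phi> b * t powr \<gamma>1 \<le> \<Phi> t * b powr \<gamma>1" by (rule gI1[OF True tb])
        ultimately have "G t / \<Phi> t \<le> (CG * b powr \<gamma>1 / \<Phi> b) * (t powr \<beta> / t powr \<gamma>1)"
          using \<Phi>pos[OF t0] \<Phi>pos[OF b(3)] t0 CG Gpos[OF t0]
          by (intro ratio_bound) auto
        also have "t powr \<beta> / t powr \<gamma>1 = t powr (\<beta> - \<gamma>1)" by (simp add: powr_diff)
        finally have Gl: "G t / \<Phi> t \<le> (CG * b powr \<gamma>1 / \<Phi> b) * t powr (\<beta> - \<gamma>1)" .
        have "max \<alpha> \<beta> + \<bar>r t\<bar> \<le> max \<alpha> \<beta> + pinf + \<delta>"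
          using rb[OF tb] \<delta> abs_less_iff[of "r t - pinf" "\<delta>/2"] r1[OF t0] by (simp add: abs_of_nonneg)
        moreover have "0 \<le> G t / \<Phi> t" using Gpos[OF t0] \<Phi>pos[OF t0] by simp
        moreover have "0 \<le> max \<alpha> \<beta> + \<bar>r t\<bar>" using \<alpha>1 by linarith
        ultimately have "K * (G t / \<Phi> t) * (max \<alpha> \<beta> + \<bar>r t\<bar>) \<le> K * ((CG * b powr \<gamma>1 / \<Phi> b) * t powr (\<beta> - \<gamma>1)) * (max \<alpha> \<beta> + pinf + \<delta>)"
          using K Gl CG \<Phi>pos[OF b(3)] by (intro mult_mono mult_left_mono) auto
        then show "norm (R t - r t) \<le> M1 * t powr (\<beta> - \<gamma>1)"
          using Rr[OF t0] by (simp add: M1_def algebra_simps)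
      qed
      have "\<beta> - \<gamma>1 < 0" using True by (simp add: \<gamma>1_def)
      then have "((\<lambda>t. t powr (\<beta> - \<gamma>1)) \<longlongrightarrow> 0) at_top"
        by (intro tendsto_neg_powr filterlim_ident)
      then show "((\<lambda>t. M1 * t powr (\<beta> - \<gamma>1)) \<longlongrightarrow> 0) at_top"
        using tendsto_mult[OF tendsto_const[of M1]] by fastforce
    qed
    from tendsto_add[OF rlI this] show ?thesis by simp
  next
    case False
    then have \<beta>eq: "\<beta> = pinf" using \<beta>p by simp
    have "((\<lambda>t. \<beta> + (\<alpha> - \<beta>) * inverse (1 + t)) \<longlongrightarrow> \<beta> + (\<alpha> - \<beta>) * 0) at_top"
      by (intro tendsto_add tendsto_const tendsto_mult tendsto_inverse_0_at_top
            filterlim_tendsto_add_at_top[OF tendsto_const filterlim_ident])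
    then have "((\<lambda>t. \<beta> + (\<alpha> - \<beta>) * inverse (1 + t)) \<longlongrightarrow> pinf) at_top" using \<beta>eq by simp
    moreover have "\<forall>\<^sub>F t in at_top. \<beta> + (\<alpha> - \<beta>) * inverse (1 + t) = \<sigma> t"
      using eventually_gt_at_top[of 0]
      by eventually_elim (simp add: \<sigma>_def field_simps)
    ultimately have sl: "(\<sigma> \<longlongrightarrow> pinf) at_top" by (rule Lim_transform_eventually)
    have lo: "((\<lambda>t. min (r t) (\<sigma> t)) \<longlongrightarrow> min pinf pinf) at_top" by (intro tendsto_min rlI sl)
    have hi: "((\<lambda>t. max (r t) (\<sigma> t)) \<longlongrightarrow> max pinf pinf) at_top" by (intro tendsto_max rlI sl)
    show ?thesis
    proof (rule tendsto_sandwich[OF _ _ _ _])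
      show "\<forall>\<^sub>F t in at_top. min (r t) (\<sigma> t) \<le> R t"
        using eventually_gt_at_top[of 0]
      proof eventually_elim
        case (elim t)
        show ?case unfolding R_eq[OF elim] using \<Phi>pos[OF elim] K Gpos[OF elim]
          by (intro mediant(1)[where U="max (r t) (\<sigma> t)"]) auto
      qed
      show "\<forall>\<^sub>F t in at_top. R t \<le> max (r t) (\<sigma> t)"
        using eventually_gt_at_top[of 0]
      proof eventually_elim
        case (elim t)
        show ?case unfolding R_eq[OF elim] using \<Phi>pos[OF elim] K Gpos[OF elim]
          by (intro mediant(2)[where L="min (r t) (\<sigma> t)"]) auto
      qed
    qed (use lo hi in auto)
  qed

  have Y\<Psi>: "young_function \<Psi>"
    unfolding young_function_def
  proof (intro conjI allI impI)
    have "convex_on {0..} (\<lambda>t. \<Phi> t + K * Gf \<alpha> \<beta> t)"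
      using Y Gf_convex[OF \<alpha>1 \<beta>1] K
      by (intro convex_on_add convex_on_cmul) (auto simp: young_function_def)
    then show "convex_on {0..} \<Psi>" by (simp add: \<Psi>eq)
    show "\<Psi> 0 = 0" using young_zero[OF Y] G0 by (simp add: \<Psi>_def)
    fix t :: real assume "0 < t"
    then show "0 < \<Psi> t" using \<Phi>pos[of t] Gpos[of t] K by (simp add: \<Psi>_def add_pos_pos)
  next
    have "filterlim \<Phi> at_top at_top" using Y by (simp add: young_function_def)
    moreover have "\<forall>\<^sub>F t in at_top. \<Phi> t \<le> \<Psi> t"
      using eventually_ge_at_top[of 0] by eventually_elim (use Gnn K in \<open>simp add: \<Psi>_def\<close>)
    ultimately show "filterlim \<Psi> at_top at_top" by (rule filterlim_at_top_mono)
  qed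

  have Eq: "young_equiv \<Phi> \<Psi>"
    unfolding young_equiv_def
  proof (intro exI[of _ "1 + K * E"] conjI allI impI)
    show "1 \<le> 1 + K * E" using K Eg by simp
    fix t :: real assume t: "0 \<le> t"
    have P: "0 \<le> \<Phi> t" using young_nonneg[OF Y t] .
    have "K * G t \<le> K * (E * \<Phi> t)" using G_le[OF t] K by simp
    then have "\<Psi> t \<le> (1 + K * E) * \<Phi> t" by (simp add: \<Psi>_def algebra_simps)
    then show "\<Psi> t / (1 + K * E) \<le> \<Phi> t" using K Eg by (simp add: pos_divide_le_eq add_pos_nonneg mult.commute)
    have "\<Phi> t \<le> \<Psi> t" using Gnn[OF t] K by (simp add: \<Psi>_def)
    also have "\<Psi> t \<le> (1 + K * E) * \<Psi> t" using mult_right_mono[of 1 "1 + K * E" "\<Psi> t"] K Eg P Gnn[OF t] by (simp add: \<Psi>_def)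
    finally show "\<Phi> t \<le> (1 + K * E) * \<Psi> t" .
  qed

  have up: "upper_index \<Psi> = (SUP t\<in>{0<..}. ereal (R t))" by (simp add: upper_index_def R_def)
  have lw: "lower_index \<Psi> = (INF t\<in>{0<..}. ereal (R t))" by (simp add: lower_index_def R_def)
  have S1: "ereal (max p0 pinf) \<le> upper_index \<Psi>"
    unfolding up by (rule sup_part(1)[OF _ R0 RI]) (use R_bounds in blast)
  have S2: "upper_index \<Psi> \<le> ereal (max p0 pinf + 3*\<delta>/2)"
    unfolding up by (rule sup_part(2)[OF _ R0 RI]) (use R_bounds in blast)
  have I1: "lower_index \<Psi> \<le> ereal (min p0 pinf)"
    unfolding lw by (rule inf_part(1)[OF _ R0 RI]) (use R_bounds in blast)
  have I2: "ereal (min p0 pinf - 3*\<delta>/2) \<le> lower_index \<Psi>"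
    unfolding lw by (rule inf_part(2)[OF _ R0 RI]) (use R_bounds in blast)
  have "ereal (max p0 pinf + 3*\<delta>/2) < ereal (max p0 pinf + \<epsilon>)" using \<epsilon> by (simp add: \<delta>_def)
  with S2 have S2': "upper_index \<Psi> < ereal (max p0 pinf + \<epsilon>)" by (rule le_less_trans)
  have "ereal (min p0 pinf - \<epsilon>) < ereal (min p0 pinf - 3*\<delta>/2)" using \<epsilon> by (simp add: \<delta>_def)
  from this I2 have I2': "ereal (min p0 pinf - \<epsilon>) < lower_index \<Psi>" by (rule less_le_trans)
  show "\<exists>\<Psi>. young_function \<Psi> \<and> young_equiv \<Phi> \<Psi> \<and>
           ereal (max p0 pinf) \<le> upper_index \<Psi> \<and> upper_index \<Psi> < ereal (max p0 pinf + \<epsilon>) \<and>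
           ereal (min p0 pinf - \<epsilon>) < lower_index \<Psi> \<and> lower_index \<Psi> \<le> ereal (min p0 pinf)"
    using Y\<Psi> Eq S1 S2' I2' I1 by blast
qed

end
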